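(* For each $n\ge 3$ there is a bounded non-commutative BCK-algebra $\mathcal B$ of order $n$ with $\operatorname{dnd}(\mathcal B)=\frac2n$.
   Context: A BCK-algebra is a set $A$ with a binary operation $\cdot$ and a constant $0$ such that for all $x,y,z\in A$: (BCK1) $((x\cdot y)\cdot(x\cdot z))\cdot(z\cdot y)=0$; (BCK2) $(x\cdot(x\cdot y))\cdot y=0$; (BCK3) $x\cdot x=0$; (BCK4) $0\cdot x=0$; (BCK5) $x\cdot y=0$ and $y\cdot x=0$ imply $x=y$. Define $x\wedge y:=y\cdot(y\cdot x)$; the algebra is commutative if $x\wedge y=y\wedge x$ for all $x,y$. A bounded BCK-algebra has a distinguished element $1$ with $x\cdot 1=0$ for all $x$; $\neg x:=1\cdot x$. For a finite bounded BCK-algebra $\mathcal A$, the double negation degree is $\operatorname{dnd}(\mathcal A)=|\{x\in\mathcal A:\neg\neg x=x\}|/|\mathcal A|$. The order of a finite algebra is its cardinality. *)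

theory Defs
  imports Complex_Main
begin

definition bck_algebra :: "'a set \<Rightarrow> ('a \<Rightarrow> 'a \<Rightarrow> 'a) \<Rightarrow> 'a \<Rightarrow> bool" where
  "bck_algebra A m z \<longleftrightarrow>
     z \<in> A \<and> (\<forall>x\<in>A. \<forall>y\<in>A. m x y \<in> A) \<and>
     (\<forall>x\<in>A. \<forall>y\<in>A. \<forall>w\<in>A. m (m (m x y) (m x w)) (m w y) = z) \<and>
     (\<forall>x\<in>A. \<forall>y\<in>A. m (m x (m x y)) y = z) \<and>
     (\<forall>x\<in>A. m x x = z) \<and>
     (\<forall>x\<in>A. m z x = z) \<and>
     (\<forall>x\<in>A. \<forall>y\<in>A. m x y = z \<and> m y x = z \<longrightarrow> x = y)"

definition bck_meet :: "('a \<Rightarrow> 'a \<Rightarrow> 'a) \<Rightarrow> 'a \<Rightarrow> 'a \<Rightarrow> 'a" where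
  "bck_meet m x y = m y (m y x)"

definition bck_commutative :: "'a set \<Rightarrow> ('a \<Rightarrow> 'a \<Rightarrow> 'a) \<Rightarrow> bool" where
  "bck_commutative A m \<longleftrightarrow> (\<forall>x\<in>A. \<forall>y\<in>A. bck_meet m x y = bck_meet m y x)"

definition bounded_bck_algebra :: "'a set \<Rightarrow> ('a \<Rightarrow> 'a \<Rightarrow> 'a) \<Rightarrow> 'a \<Rightarrow> 'a \<Rightarrow> bool" where
  "bounded_bck_algebra A m z u \<longleftrightarrow> bck_algebra A m z \<and> u \<in> A \<and> (\<forall>x\<in>A. m x u = z)"

definition bck_neg :: "('a \<Rightarrow> 'a \<Rightarrow> 'a) \<Rightarrow> 'a \<Rightarrow> 'a \<Rightarrow> 'a" where
  "bck_neg m u x = m u x"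

definition dnd :: "'a set \<Rightarrow> ('a \<Rightarrow> 'a \<Rightarrow> 'a) \<Rightarrow> 'a \<Rightarrow> real" where
  "dnd A m u = real (card {x\<in>A. bck_neg m u (bck_neg m u x) = x}) / real (card A)"

end

theory Submission
  imports Defs
begin

theorem theorem4p4:
  fixes n :: nat
  assumes "n \<ge> 3"
  shows "\<exists>(B :: nat set) m z u. bounded_bck_algebra B m z u \<and> finite B \<and> card B = n
           \<and> \<not> bck_commutative B m \<and> dnd B m u = 2 / real n"
proof -
  define m :: "nat \<Rightarrow> nat \<Rightarrow> nat" where "m x y = (if x \<le> y then 0 else x)" for x y
  have bck: "bck_algebra {0..<n} m 0"
    unfolding bck_algebra_def m_def using assms by auto
  have bd: "bounded_bck_algebra {0..<n} m 0 (n - 1)"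
    unfolding bounded_bck_algebra_def using bck assms by (auto simp: m_def)
  have nc: "\<not> bck_commutative {0..<n} m"
  proof
    assume "bck_commutative {0..<n} m"
    hence "bck_meet m 1 (n-1) = bck_meet m (n-1) 1" using assms
      unfolding bck_commutative_def by auto
    thus False using assms by (simp add: bck_meet_def m_def split: if_splits)
  qed
  have S: "{x\<in>{0..<n}. bck_neg m (n-1) (bck_neg m (n-1) x) = x} = {0, n-1}"
    using assms by (auto simp: bck_neg_def m_def)
  have "card {0::nat, n-1} = 2" using assms by simp
  hence "dnd {0..<n} m (n-1) = 2 / real n" unfolding dnd_def S by simp
  thus ?thesis using bd nc by (intro exI[of _ "{0..<n}"] exI[of _ m] exI[of _ 0] exI[of _ "n-1"]) auto
qed

end
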